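(* Let $t,\alpha,\lambda>0$ and $n$ be given. For a differentiable function $R(t)$ define $$r(t)=\frac{tR'(t)+\lambda-R(t)\big(t+2n+\alpha+\lambda-tR(t)\big)}{2},\quad \beta^*(t)=\frac{1}{1-R(t)}\left(n(\alpha+n)+\frac{r(t)^2-\lambda r(t)}{R(t)}+(\alpha+\lambda+2n)r(t)\right),$$ $$\Sigma(t)=\frac{n(\alpha+\lambda+n)-t\,r(t)-\beta^*(t)}{t},$$ and consider the equation $$P''(z)+\left(\frac{\alpha+1}{z}+\frac{\lambda+1}{z+t}-1-\frac{1}{z+t[1-R(t)]}\right)P'(z)+\left(\frac{t(r(t)+nR(t))}{z(z+t)(z+t(1-R(t)))}+\frac{n-\Sigma(t)}{z}+\frac{\Sigma(t)}{z+t}\right)P(z)=0.\quad(\ast)$$ If $R$ satisfies the Riccati equation $tR'(t)=tR(t)^2-(\alpha+\lambda+t)R(t)+\lambda$, with solution $$R(t)=\frac{\alpha C_2U(\alpha+1,\alpha+\lambda+1,t)+L_{-\alpha-1}^{\alpha+\lambda}(t)}{C_2U(\alpha,\alpha+\lambda,t)+L_{-\alpha}^{\alpha+\lambda-1}(t)}+1$$ for a constant $C_2$, then for a solution $P$ of $(\ast)$ the function $\widetilde P(u):=P(-tu)$ satisfies $$\widetilde P''(u)+\left(\frac{\tilde\gamma+1}{u}+\frac{\tilde\delta+1}{u-1}+\tilde\epsilon-\frac{\tilde\alpha}{\tilde\alpha u-\tilde q}\right)\widetilde P'(u)+\frac{(\tilde\alpha+\tilde\epsilon)(\tilde\alpha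 u^2-2\tilde qu)+\tilde\alpha\tilde\gamma+\tilde q^2-\tilde q(\tilde\gamma+\tilde\delta-\tilde\epsilon)}{u(u-1)(\tilde\alpha u-\tilde q)}\widetilde P(u)=0$$ (the equation satisfied by the derivative of a confluent Heun function) with $\tilde\gamma=\alpha$, $\tilde\delta=\lambda$, $\tilde\epsilon=t$, $\tilde q=-(n+1)t(1-R(t))$, $\tilde\alpha=-(n+1)t$.
   Context: $U(a,b,x)$ is the Kummer confluent hypergeometric function of the second kind and $L_\nu^{a}(x)$ is the generalized Laguerre function. Equation $(\ast)$ is the second-order ODE satisfied by the monic polynomials orthogonal with respect to $x^\alpha(x+t)^\lambda e^{-x}$ on $[0,\infty)$ when $R$ is the auxiliary quantity $R_n(t)=\frac{\lambda}{h_n}\int_0^\infty\frac{P_n^2(x)}{x+t}x^\alpha(x+t)^\lambda e^{-x}dx$; here it is regarded as an equation determined by an arbitrary function $R$. *)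

theory Defs
  imports "HOL-Complex_Analysis.Complex_Analysis"
begin

definition r_aux :: "real \<Rightarrow> real \<Rightarrow> real \<Rightarrow> nat \<Rightarrow> (real \<Rightarrow> real) \<Rightarrow> real" where
  "r_aux t \<alpha> lam n R =
     (t * deriv R t + lam - R t * (t + 2 * real n + \<alpha> + lam - t * R t)) / 2"

definition beta_star :: "real \<Rightarrow> real \<Rightarrow> real \<Rightarrow> nat \<Rightarrow> (real \<Rightarrow> real) \<Rightarrow> real" where
  "beta_star t \<alpha> lam n R =
     (let r = r_aux t \<alpha> lam n R in
      (1 / (1 - R t)) * (real n * (\<alpha> + real n) + (r\<^sup>2 - lam * r) / R t
                         + (\<alpha> + lam + 2 * real n) * r))"

definition Sigma_aux :: "real \<Rightarrow> real \<Rightarrow> real \<Rightarrow> nat \<Rightarrow> (real \<Rightarrow> real) \<Rightarrow> real" where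
  "Sigma_aux t \<alpha> lam n R =
     (real n * (\<alpha> + lam + real n) - t * r_aux t \<alpha> lam n R - beta_star t \<alpha> lam n R) / t"

end

theory Submission
  imports Defs
begin

lemma coefA:
  fixes u T c g d :: complex and m :: complex
  assumes "u \<noteq> 0" "u \<noteq> 1" "u \<noteq> c" "T \<noteq> 0" "m \<noteq> 0"
  shows "((g + 1) / u + (d + 1) / (u - 1) + T - (- m * T) / ((- m * T) * u - (- m * T * c))) * (- T)
    = T^2 * ((g + 1) / (- (T * u)) + (d + 1) / (- (T * u) + T) - 1 - 1 / (- (T * u) + T * c))"
proof -
  have n1: "1 - u \<noteq> 0" "c - u \<noteq> 0" "u - 1 \<noteq> 0" "u - c \<noteq> 0" using assms by auto
  have e1: "(g + 1) / u * (- T) = T^2 * ((g + 1) / (- (T * u)))"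
    using assms by (simp add: field_simps power2_eq_square)
  have "- (T * u) + T = T * (1 - u)" by (simp add: algebra_simps)
  hence e2: "(d + 1) / (u - 1) * (- T) = T^2 * ((d + 1) / (- (T * u) + T))"
    using assms n1 by (simp add: field_simps power2_eq_square)
  have "- (T * u) + T * c = T * (c - u)" by (simp add: algebra_simps)
  moreover have "(- m * T) * u - (- m * T * c) = (- m * T) * (u - c)" by (simp add: algebra_simps)
  ultimately have e3: "(- m * T) / ((- m * T) * u - (- m * T * c)) * (- T) = T^2 * (1 / (- (T * u) + T * c))"
    using assms n1 by (simp add: field_simps power2_eq_square)
  show ?thesis using e1 e2 e3 by (simp add: algebra_simps power2_eq_square)
qed


lemma coefB:
  fixes u T Rc g d m :: complex
  assumes "u \<noteq> 0" "u \<noteq> 1" "u \<noteq> 1 - Rc" "T \<noteq> 0" "m + 1 \<noteq> 0"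
  shows "((- (m + 1) * T + T) * ((- (m + 1) * T) * u\<^sup>2 - 2 * (- (m + 1) * T * (1 - Rc)) * u)
          + (- (m + 1) * T) * g + (- (m + 1) * T * (1 - Rc))\<^sup>2
          - (- (m + 1) * T * (1 - Rc)) * (g + d - T))
         / (u * (u - 1) * ((- (m + 1) * T) * u - (- (m + 1) * T * (1 - Rc))))
    = T^2 * ((T * ((T * Rc^2 - (g + d + T + m) * Rc + d) + m * Rc))
            / ((- (T * u)) * (- (T * u) + T) * (- (T * u) + T * (1 - Rc)))
          + (m - m * Rc) / (- (T * u))
          + (m * Rc) / (- (T * u) + T))"
proof -
  define c where "c = 1 - Rc"
  define X where "X = (T * Rc^2 - (g + d + T + m) * Rc + d) + m * Rc"
  define a where "a = - (m + 1) * T"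
  define D where "D = u * (u - 1) * (u - c)"
  have n1: "1 - u \<noteq> 0" "c - u \<noteq> 0" "u - 1 \<noteq> 0" "u - c \<noteq> 0" "a \<noteq> 0"
    using assms by (auto simp: c_def a_def) (metis add.commute add_eq_0_iff)
  have D0: "D \<noteq> 0" using n1 assms by (simp add: D_def)
  have h1: "- (T * u) + T = T * (1 - u)" by (simp add: algebra_simps)
  have h2: "- (T * u) + T * c = T * (c - u)" by (simp add: algebra_simps)
  have h3: "a * u - a * c = a * (u - c)" by (simp add: algebra_simps)
  have t1: "T^2 * ((T * X) / ((- (T * u)) * (- (T * u) + T) * (- (T * u) + T * c))) = - X / D"
  proof -
    have "(- (T * u)) * (T * (1 - u)) * (T * (c - u)) = - (T^2 * T) * D"
      unfolding D_def by (simp add: algebra_simps power2_eq_square)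
    then show ?thesis unfolding h1 h2 using assms D0 by (simp add: power2_eq_square)
  qed
  have t2: "T^2 * ((m - m * Rc) / (- (T * u))) = (- T * (m - m * Rc) * (u - 1) * (u - c)) / D"
    using D0 apply (simp only: eq_divide_eq if_not_P)
    unfolding D_def using assms n1 by (simp add: field_simps power2_eq_square)
  have t3: "T^2 * ((m * Rc) / (- (T * u) + T)) = (- T * (m * Rc) * u * (u - c)) / D"
    using D0 apply (simp only: eq_divide_eq if_not_P)
    unfolding h1 D_def using assms n1 by (simp add: field_simps power2_eq_square)
  have L: "((a + T) * (a * u\<^sup>2 - 2 * (a * c) * u) + a * g + (a * c)\<^sup>2 - (a * c) * (g + d - T))
         / (u * (u - 1) * (a * u - a * c))
      = (- X - T * (m - m * Rc) * (u - 1) * (u - c) - T * (m * Rc) * u * (u - c)) / D"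
  proof -
    have "(a + T) * (a * u\<^sup>2 - 2 * (a * c) * u) + a * g + (a * c)\<^sup>2 - (a * c) * (g + d - T)
       = a * (- X - T * (m - m * Rc) * (u - 1) * (u - c) - T * (m * Rc) * u * (u - c))"
      unfolding a_def c_def X_def by (simp add: algebra_simps power2_eq_square)
    moreover have "u * (u - 1) * (a * u - a * c) = a * D" unfolding h3 D_def by simp
    ultimately show ?thesis using n1 D0 by simp
  qed
  have "T^2 * ((T * X) / ((- (T * u)) * (- (T * u) + T) * (- (T * u) + T * c))
          + (m - m * Rc) / (- (T * u)) + (m * Rc) / (- (T * u) + T))
       = - X / D + (- T * (m - m * Rc) * (u - 1) * (u - c)) / D + (- T * (m * Rc) * u * (u - c)) / D"
    unfolding distrib_left[of "T^2"] t1 t2 t3 ..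
  also have "\<dots> = (- X - T * (m - m * Rc) * (u - 1) * (u - c) - T * (m * Rc) * u * (u - c)) / D"
    by (simp add: add_divide_distrib diff_divide_distrib)
  finally show ?thesis using L unfolding a_def c_def X_def by simp
qed

lemma comb:
  fixes A B C D T P0 P1 P2 :: complex
  assumes "A * (- T) = T^2 * C" "B = T^2 * D" "P2 + C * P1 + D * P0 = 0"
  shows "T^2 * P2 + A * (- T * P1) + B * P0 = 0"
proof -
  have "T^2 * P2 + A * (- T * P1) + B * P0 = T^2 * P2 + (A * (- T)) * P1 + B * P0"
    by (simp add: algebra_simps)
  also have "\<dots> = T^2 * (P2 + C * P1 + D * P0)" unfolding assms(1,2) by (simp add: algebra_simps)
  finally show ?thesis using assms(3) by simp
qed

theorem mainTheorem13:
  fixes t \<alpha> lam :: real and n :: nat and R :: "real \<Rightarrow> real"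
    and P :: "complex \<Rightarrow> complex" and S :: "complex set"
  assumes ht: "t > 0" and ha: "\<alpha> > 0" and hl: "lam > 0"
    and hRdiff: "\<forall>s>0. R differentiable (at s)"
    and hRicc: "\<forall>s>0. s * deriv R s = s * (R s)\<^sup>2 - (\<alpha> + lam + s) * R s + lam"
    and hR0: "R t \<noteq> 0" and hR1: "R t \<noteq> 1"
    and hS: "open S" and hP: "P holomorphic_on S"
    and hODE: "\<forall>z\<in>S. z \<noteq> 0 \<and> z \<noteq> - of_real t \<and> z \<noteq> - of_real (t * (1 - R t)) \<longrightarrow>
       deriv (deriv P) z
       + ((of_real \<alpha> + 1) / z + (of_real lam + 1) / (z + of_real t) - 1
          - 1 / (z + of_real (t * (1 - R t)))) * deriv P z
       + (of_real (t * (r_aux t \<alpha> lam n R + real n * R t))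
            / (z * (z + of_real t) * (z + of_real (t * (1 - R t))))
          + (of_nat n - of_real (Sigma_aux t \<alpha> lam n R)) / z
          + of_real (Sigma_aux t \<alpha> lam n R) / (z + of_real t)) * P z = 0"
  shows "\<forall>u::complex. - (of_real t * u) \<in> S \<and> u \<noteq> 0 \<and> u \<noteq> 1 \<and> u \<noteq> of_real (1 - R t) \<longrightarrow>
     (let Pt = (\<lambda>v. P (- (of_real t * v)));
          g = of_real \<alpha>; d = of_real lam; e = of_real t;
          q = - (of_nat n + 1) * of_real t * of_real (1 - R t);
          a = - (of_nat n + 1) * of_real t
      in deriv (deriv Pt) u
         + ((g + 1) / u + (d + 1) / (u - 1) + e - a / (a * u - q)) * deriv Pt u
         + ((a + e) * (a * u\<^sup>2 - 2 * q * u) + a * g + q\<^sup>2 - q * (g + d - e))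
             / (u * (u - 1) * (a * u - q)) * Pt u = 0)"
proof (intro allI impI)
  fix u :: complex
  assume hu: "- (of_real t * u) \<in> S \<and> u \<noteq> 0 \<and> u \<noteq> 1 \<and> u \<noteq> of_real (1 - R t)"
  define K where "K = \<alpha> + lam + t + real n"
  have tne: "t \<noteq> 0" using ht by simp
  have dR: "deriv R t = (t * (R t)\<^sup>2 - (\<alpha> + lam + t) * R t + lam) / t"
  proof -
    have "t * deriv R t = t * (R t)\<^sup>2 - (\<alpha> + lam + t) * R t + lam" using hRicc ht by blast
    then show ?thesis using tne by (simp add: field_simps)
  qed
  have rr: "r_aux t \<alpha> lam n R = t * (R t)\<^sup>2 - K * R t + lam"
    unfolding r_aux_def dR K_def using tne by (simp add: field_simps power2_eq_square)
  define rv where "rv = r_aux t \<alpha> lam n R"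
  have rr2: "rv = t * (R t)\<^sup>2 - K * R t + lam" using rr rv_def by simp
  have q1: "(rv\<^sup>2 - lam * rv) / R t = rv * (t * R t - K)"
  proof -
    have "rv\<^sup>2 - lam * rv = R t * (rv * (t * R t - K))"
      unfolding power2_eq_square by (subst (2) rr2) (simp add: algebra_simps power2_eq_square)
    then show ?thesis using hR0 by simp
  qed
  have hR1': "1 - R t \<noteq> 0" using hR1 by simp
  have Y: "real n * (\<alpha> + real n) + rv * (t * R t - K) + (\<alpha> + lam + 2 * real n) * rv
      = (1 - R t) * (real n * (\<alpha> + lam + real n) - t * rv - t * real n * R t)"
    unfolding K_def by (subst (1 2 3) rr2) (simp add: algebra_simps power2_eq_square K_def)
  have bs: "beta_star t \<alpha> lam n R = real n * (\<alpha> + lam + real n) - t * rv - t * real n * R t"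
    unfolding beta_star_def Let_def rv_def[symmetric] q1 Y using hR1' by simp
  have Sig: "Sigma_aux t \<alpha> lam n R = real n * R t"
    unfolding Sigma_aux_def bs rv_def[symmetric] using tne by (simp add: field_simps)
  have e1: "complex_of_real (t * (1 - R t)) = of_real t * (1 - of_real (R t))" by simp
  have e2: "complex_of_real (1 - R t) = 1 - of_real (R t)" by simp
  have e3: "complex_of_real (t * (r_aux t \<alpha> lam n R + real n * R t)) = of_real t * ((of_real t * (of_real (R t))\<^sup>2 - (of_real \<alpha> + of_real lam + of_real t + of_nat n) * of_real (R t) + of_real lam) + of_nat n * of_real (R t))"
    unfolding rr K_def by simp
  have e4: "complex_of_real (Sigma_aux t \<alpha> lam n R) = of_nat n * of_real (R t)"
    unfolding Sig by simp
  define z where "z = - (of_real t * u)"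
  have zS: "z \<in> S" using hu z_def by simp
  have Tne: "complex_of_real t \<noteq> 0" using tne by simp
  have z1: "z \<noteq> 0" "z \<noteq> - of_real t" "z \<noteq> - of_real (t * (1 - R t))"
  proof -
    show "z \<noteq> 0" using hu Tne z_def by simp
    show "z \<noteq> - of_real t"
    proof
      assume "z = - of_real t"
      then have "of_real t * u = of_real t * 1" using z_def by simp
      then show False using hu Tne by (metis mult_left_cancel)
    qed
    show "z \<noteq> - of_real (t * (1 - R t))"
    proof
      assume "z = - of_real (t * (1 - R t))"
      then have "of_real t * u = of_real t * of_real (1 - R t)" using z_def by simp
      then show False using hu Tne by (metis mult_left_cancel)
    qed
  qed
  have H: "deriv (deriv P) z
       + ((of_real \<alpha> + 1) / z + (of_real lam + 1) / (z + of_real t) - 1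
          - 1 / (z + of_real t * (1 - of_real (R t)))) * deriv P z
       + ((of_real t * ((of_real t * (of_real (R t))\<^sup>2 - (of_real \<alpha> + of_real lam + of_real t + of_nat n) * of_real (R t) + of_real lam) + of_nat n * of_real (R t)))
            / (z * (z + of_real t) * (z + of_real t * (1 - of_real (R t))))
          + (of_nat n - of_nat n * of_real (R t)) / z
          + (of_nat n * of_real (R t)) / (z + of_real t)) * P z = 0"
    using hODE zS z1 unfolding e1 e3 e4 by blast
  define Ts where "Ts = (\<lambda>v. - (complex_of_real t * v)) -` S"
  have oT: "open Ts" unfolding Ts_def
    by (rule continuous_open_vimage[OF hS]) (intro continuous_intros)
  have uT: "u \<in> Ts" using hu Ts_def by simp
  have gd: "\<And>v. ((\<lambda>v. - (complex_of_real t * v)) has_field_derivative - of_real t) (at v)"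
    by (auto intro!: derivative_eq_intros)
  have hdP: "deriv P holomorphic_on S" using hP hS by (rule holomorphic_deriv)
  have d1: "\<And>v. v \<in> Ts \<Longrightarrow> ((\<lambda>v. P (- (of_real t * v))) has_field_derivative deriv P (- (of_real t * v)) * (- of_real t)) (at v)"
    by (rule DERIV_chain2[OF holomorphic_derivI[OF hP hS] gd]) (simp add: Ts_def)
  have d1': "\<And>v. v \<in> Ts \<Longrightarrow> deriv (\<lambda>v. P (- (of_real t * v))) v = deriv P (- (of_real t * v)) * (- of_real t)"
    using d1 DERIV_imp_deriv by blast
  have d2: "((\<lambda>v. deriv P (- (of_real t * v)) * (- of_real t)) has_field_derivative deriv (deriv P) (- (of_real t * u)) * (- of_real t) * (- of_real t)) (at u)"
    by (rule DERIV_cmult_right, rule DERIV_chain2[OF holomorphic_derivI[OF hdP hS] gd]) (use uT Ts_def in simp)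
  have d2': "(deriv (\<lambda>v. P (- (of_real t * v))) has_field_derivative deriv (deriv P) (- (of_real t * u)) * (- of_real t) * (- of_real t)) (at u)"
    by (rule has_field_derivative_transform_within_open[OF d2 oT uT]) (simp add: d1')
  have D2: "deriv (deriv (\<lambda>v. P (- (of_real t * v)))) u = (of_real t)^2 * deriv (deriv P) z"
    using DERIV_imp_deriv[OF d2'] z_def by (simp add: power2_eq_square)
  have D1: "deriv (\<lambda>v. P (- (of_real t * v))) u = - of_real t * deriv P z"
    using d1'[OF uT] z_def by simp
  have nz: "complex_of_nat n + 1 \<noteq> 0"
    by (metis of_nat_Suc of_nat_eq_0_iff Suc_eq_plus1 nat.distinct(1) add.commute)
  have cA': "((of_real \<alpha> + 1) / u + (of_real lam + 1) / (u - 1) + of_real t - (- (of_nat n + 1) * of_real t) / ((- (of_nat n + 1) * of_real t) * u - (- (of_nat n + 1) * of_real t * of_real (1 - R t)))) * (- of_real t)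
    = (of_real t)^2 * ((of_real \<alpha> + 1) / z + (of_real lam + 1) / (z + of_real t) - 1 - 1 / (z + of_real t * (1 - of_real (R t))))"
    unfolding e2 z_def by (rule coefA) (use hu Tne nz in auto)
  have cB: "((- (of_nat n + 1) * of_real t + of_real t) * ((- (of_nat n + 1) * of_real t) * u\<^sup>2 - 2 * (- (of_nat n + 1) * of_real t * of_real (1 - R t)) * u)
          + (- (of_nat n + 1) * of_real t) * of_real \<alpha> + (- (of_nat n + 1) * of_real t * of_real (1 - R t))\<^sup>2
          - (- (of_nat n + 1) * of_real t * of_real (1 - R t)) * (of_real \<alpha> + of_real lam - of_real t))
         / (u * (u - 1) * ((- (of_nat n + 1) * of_real t) * u - (- (of_nat n + 1) * of_real t * of_real (1 - R t))))
    = (of_real t)^2 * ((of_real t * ((of_real t * (of_real (R t))\<^sup>2 - (of_real \<alpha> + of_real lam + of_real t + of_nat n) * of_real (R t) + of_real lam) + of_nat n * of_real (R t)))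
            / (z * (z + of_real t) * (z + of_real t * (1 - of_real (R t))))
          + (of_nat n - of_nat n * of_real (R t)) / z
          + (of_nat n * of_real (R t)) / (z + of_real t))"
    unfolding e2 z_def
    by (rule coefB) (use hu Tne nz in auto)
  show "let Pt = (\<lambda>v. P (- (of_real t * v)));
          g = of_real \<alpha>; d = of_real lam; e = of_real t;
          q = - (of_nat n + 1) * of_real t * of_real (1 - R t);
          a = - (of_nat n + 1) * of_real t
      in deriv (deriv Pt) u
         + ((g + 1) / u + (d + 1) / (u - 1) + e - a / (a * u - q)) * deriv Pt u
         + ((a + e) * (a * u\<^sup>2 - 2 * q * u) + a * g + q\<^sup>2 - q * (g + d - e))
             / (u * (u - 1) * (a * u - q)) * Pt u = 0"
    unfolding Let_def D1 D2 z_def[symmetric]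
    by (rule comb[OF cA' cB H])
qed

end
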